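(* Let $n\ge2$ and let $T$ be a symmetric linear isomorphism of $\mathbb R^n$ which is not positive-definite. Then the equation $X^\circ=T(X)$ has infinitely many solutions $X\in\mathcal K_{(0),b}^n$. In particular $X^\circ=-X$ has infinitely many solutions in $\mathcal K_{(0),b}^n$.
   Context: $\mathcal K_{(0),b}^n$: compact convex subsets of $\mathbb R^n$ containing $0$ in their interior. Polar: $X^\circ=\{x:\sup_{a\in X}\langle a,x\rangle\le1\}$. *)

theory Defs
  imports "HOL-Analysis.Analysis"
begin

definition polar :: "('a::real_inner) set \<Rightarrow> 'a set" where
  "polar X = {x. \<forall>a\<in>X. a \<bullet> x \<le> 1}"

definition K0b :: "('a::euclidean_space) set set" where
  "K0b = {X. compact X \<and> convex X \<and> 0 \<in> interior X}"

definition symmetric_map :: "('a::real_inner \<Rightarrow> 'a) \<Rightarrow> bool" where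
  "symmetric_map T \<longleftrightarrow> linear T \<and> (\<forall>x y. T x \<bullet> y = x \<bullet> T y)"

definition positive_definite :: "('a::real_inner \<Rightarrow> 'a) \<Rightarrow> bool" where
  "positive_definite T \<longleftrightarrow> (\<forall>x. x \<noteq> 0 \<longrightarrow> x \<bullet> T x > 0)"

end

theory Submission
  imports Defs
begin


lemma quad_zero:
  fixes A B :: real
  assumes "\<forall>t. A*t + B*t^2 \<ge> 0"
  shows "A = 0"
proof (rule ccontr)
  assume "A \<noteq> 0"
  define D where "D = \<bar>B\<bar>+1"
  have d: "D > 0" "B < D" unfolding D_def by auto
  define t where "t = -A/(2*D)"
  have h: "A*t + B*t^2 \<ge> 0" using assms by blast
  have h1: "A*t + B*t^2 = (A^2/D) * (B/(4*D) - 1/2)"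
    unfolding t_def using d by (simp add: field_simps power2_eq_square)
  have h2: "B/(4*D) - 1/2 < 0" using d by (simp add: field_simps)
  have h3: "A^2/D > 0" using \<open>A\<noteq>0\<close> d by simp
  have "A*t + B*t^2 < 0" using h1 mult_pos_neg[OF h3 h2] by simp
  with h show False by simp
qed
lemma spectral_sub:
  fixes T :: "'a::euclidean_space \<Rightarrow> 'a"
  assumes lin: "linear T" and sym: "\<And>x y. T x \<bullet> y = x \<bullet> T y"
  shows "subspace V \<Longrightarrow> T ` V \<subseteq> V \<Longrightarrow> \<exists>B. B \<subseteq> V \<and> finite B \<and> pairwise orthogonal B \<and>
     (\<forall>x\<in>B. norm x = 1) \<and> span B = V \<and> (\<forall>x\<in>B. T x = (x \<bullet> T x) *\<^sub>R x)"
proof (induction "dim V" arbitrary: V)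
  case 0
  then have "V \<subseteq> {0}" by (metis dim_eq_0)
  then have "V = {0}" using 0 subspace_0 by blast
  then show ?case by (intro exI[of _ "{}"]) auto
next
  case (Suc k V)
  have "\<not> V \<subseteq> {0}" using Suc.hyps(2) by (metis dim_eq_0 nat.distinct(1))
  then obtain v where v: "v \<in> V" "v \<noteq> 0" by auto
  define S where "S = V \<inter> sphere 0 1"
  have "v /\<^sub>R norm v \<in> S" using v Suc.prems(1) unfolding S_def
    by (auto simp: subspace_scale)
  then have Sne: "S \<noteq> {}" by auto
  have cS: "compact S" unfolding S_def
    using closed_subspace[OF Suc.prems(1)] by (metis Int_commute compact_Int_closed compact_sphere)
  have blT: "bounded_linear T" using lin linear_conv_bounded_linear by blast
  have cont: "continuous_on S (\<lambda>x. x \<bullet> T x)"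
    by (intro continuous_intros linear_continuous_on blT)
  obtain e where eS: "e \<in> S" and emin: "\<forall>y\<in>S. e \<bullet> T e \<le> y \<bullet> T y"
    using continuous_attains_inf[OF cS Sne cont] by blast
  define m where "m = e \<bullet> T e"
  have eV: "e \<in> V" and ne: "norm e = 1" using eS unfolding S_def by auto
  have ee: "e \<bullet> e = 1" using ne by (simp add: dot_square_norm)
  have ge: "z \<bullet> T z \<ge> m * (z \<bullet> z)" if "z \<in> V" for z
  proof (cases "z = 0")
    case True then show ?thesis using linear_0[OF lin] by simp
  next
    case False
    have "z /\<^sub>R norm z \<in> S" using that False Suc.prems(1) unfolding S_def
      by (auto simp: subspace_scale)
    then have "m \<le> (z /\<^sub>R norm z) \<bullet> T (z /\<^sub>R norm z)" using emin m_def by blast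
    also have "\<dots> = (z \<bullet> T z) / (norm z)^2"
      by (simp add: linear_scale[OF lin] power2_eq_square divide_inverse)
    finally have "m * (norm z)^2 \<le> z \<bullet> T z" using False by (simp add: field_simps)
    then show ?thesis by (simp add: dot_square_norm)
  qed
  have Te: "T e = m *\<^sub>R e"
  proof -
    have A0: "y \<bullet> (T e - m *\<^sub>R e) = 0" if yV: "y \<in> V" for y
    proof -
      have "\<forall>t. (2*(y \<bullet> (T e - m *\<^sub>R e)))*t + (y \<bullet> T y - m*(y \<bullet> y))*t^2 \<ge> 0"
      proof
        fix t :: real
        have "e + t *\<^sub>R y \<in> V" using eV yV Suc.prems(1) by (simp add: subspace_add subspace_scale)
        from ge[OF this] have q1: "(e + t *\<^sub>R y) \<bullet> T (e + t *\<^sub>R y) \<ge> m * ((e + t *\<^sub>R y) \<bullet> (e + t *\<^sub>R y))" .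
        have q2: "(e + t *\<^sub>R y) \<bullet> T (e + t *\<^sub>R y) = m + 2*t*(y \<bullet> T e) + t^2 * (y \<bullet> T y)"
          using sym[of e y] unfolding m_def
          by (simp add: linear_add[OF lin] linear_scale[OF lin] inner_add_left inner_add_right
              inner_commute power2_eq_square algebra_simps)
        have q3: "(e + t *\<^sub>R y) \<bullet> (e + t *\<^sub>R y) = 1 + 2*t*(y \<bullet> e) + t^2*(y \<bullet> y)"
          using ee by (simp add: inner_add_left inner_add_right inner_commute power2_eq_square algebra_simps)
        have q4: "(2*(y \<bullet> (T e - m *\<^sub>R e)))*t + (y \<bullet> T y - m*(y \<bullet> y))*t^2
           = (m + 2*t*(y \<bullet> T e) + t^2 * (y \<bullet> T y)) - m * (1 + 2*t*(y \<bullet> e) + t^2*(y \<bullet> y))"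
          by (simp add: inner_diff_right algebra_simps)
        show "(2*(y \<bullet> (T e - m *\<^sub>R e)))*t + (y \<bullet> T y - m*(y \<bullet> y))*t^2 \<ge> 0"
          using q1 unfolding q2 q3 q4 by linarith
      qed
      from quad_zero[OF this] show ?thesis by simp
    qed
    have "T e - m *\<^sub>R e \<in> V" using eV Suc.prems by (auto simp: subspace_diff subspace_scale)
    from A0[OF this] show ?thesis by simp
  qed
  define W where "W = V \<inter> {x. e \<bullet> x = 0}"
  have sW: "subspace W" unfolding W_def using Suc.prems(1) subspace_hyperplane subspace_inter by blast
  have TW: "T ` W \<subseteq> W"
  proof
    fix y assume "y \<in> T ` W"
    then obtain x where x: "x \<in> W" "y = T x" by auto
    have "e \<bullet> T x = T e \<bullet> x" using sym[of e x] by simp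
    also have "\<dots> = 0" using x Te unfolding W_def by simp
    finally show "y \<in> W" using x Suc.prems(2) unfolding W_def by auto
  qed
  have decomp: "x - (e \<bullet> x) *\<^sub>R e \<in> W" if "x \<in> V" for x
    using that eV Suc.prems(1) ee unfolding W_def by (auto simp: subspace_diff subspace_scale inner_diff_right)
  have spV: "span (insert e W) = V"
  proof
    show "span (insert e W) \<subseteq> V" using eV Suc.prems(1) unfolding W_def
      by (simp add: span_minimal)
    show "V \<subseteq> span (insert e W)"
    proof
      fix x assume "x \<in> V"
      then show "x \<in> span (insert e W)" unfolding span_insert using decomp span_eq_iff sW by blast
    qed
  qed
  have "e \<notin> W" using ee unfolding W_def by auto
  then have "e \<notin> span W" using span_eq_iff sW by blast
  then have "dim V = dim W + 1" using spV dim_insert[of e W] dim_span by metis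
  then have dW: "k = dim W" using Suc.hyps(2) by simp
  obtain B where B: "B \<subseteq> W" "finite B" "pairwise orthogonal B" "\<forall>x\<in>B. norm x = 1" "span B = W"
    "\<forall>x\<in>B. T x = (x \<bullet> T x) *\<^sub>R x" using Suc.hyps(1)[OF dW sW TW] by blast
  show ?case
  proof (intro exI[of _ "insert e B"] conjI)
    show "insert e B \<subseteq> V" using B(1) eV unfolding W_def by auto
    show "finite (insert e B)" using B by simp
    show "pairwise orthogonal (insert e B)" using B(1,3) unfolding pairwise_insert W_def
      by (auto simp: orthogonal_def inner_commute)
    show "\<forall>x\<in>insert e B. norm x = 1" using B ne by auto
    show "span (insert e B) = V"
    proof
      show "span (insert e B) \<subseteq> V" using B(1) eV Suc.prems(1) unfolding W_def by (simp add: span_minimal)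
      show "V \<subseteq> span (insert e B)" unfolding span_insert using decomp B(5) by blast
    qed
    show "\<forall>x\<in>insert e B. T x = (x \<bullet> T x) *\<^sub>R x" using B(6) Te m_def by auto
  qed
qed



definition Fw :: "real \<Rightarrow> real \<Rightarrow> real \<Rightarrow> real" where
  "Fw p q s = p * (max s 0)^2 + q * (min s 0)^2"

lemma Fw_nonneg: "p > 0 \<Longrightarrow> q > 0 \<Longrightarrow> Fw p q s \<ge> 0"
  unfolding Fw_def by simp

lemma Fw_zero[simp]: "Fw p q 0 = 0" unfolding Fw_def by simp

lemma Fw_young:
  assumes p: "p > 0" and q: "q > 0"
  shows "s * t \<le> (Fw p q s + Fw (1/p) (1/q) t) / 2"
proof (cases "s \<ge> 0")
  case True
  show ?thesis
  proof (cases "t \<ge> 0")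
    case True
    have e1: "p * (p * s^2 + t^2/p - 2 * (s * t)) = (p * s - t)^2" using p by (simp add: field_simps power2_eq_square)
    have "p * (p * s^2 + t^2/p - 2 * (s * t)) \<ge> 0" unfolding e1 by simp
    then have "2 * (s * t) \<le> p * s^2 + t^2/p" using p by (simp add: zero_le_mult_iff)
    then show ?thesis using \<open>s\<ge>0\<close> True unfolding Fw_def by simp
  next
    case False
    then have "s * t \<le> 0" using \<open>s\<ge>0\<close> by (simp add: mult_nonneg_nonpos)
    moreover have "(Fw p q s + Fw (1/p) (1/q) t) / 2 \<ge> 0" using Fw_nonneg[OF p q, of s] Fw_nonneg[of "1/p" "1/q" t] p q by simp
    ultimately show ?thesis by (rule order_trans)
  qed
next
  case False
  show ?thesis
  proof (cases "t \<ge> 0")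
    case True
    then have "s * t \<le> 0" using False by (simp add: mult_nonpos_nonneg)
    moreover have "(Fw p q s + Fw (1/p) (1/q) t) / 2 \<ge> 0" using Fw_nonneg[OF p q, of s] Fw_nonneg[of "1/p" "1/q" t] p q by simp
    ultimately show ?thesis by (rule order_trans)
  next
    case tF: False
    have e1: "q * (q * s^2 + t^2/q - 2 * (s * t)) = (q * s - t)^2" using q by (simp add: field_simps power2_eq_square)
    have "q * (q * s^2 + t^2/q - 2 * (s * t)) \<ge> 0" unfolding e1 by simp
    then have "2 * (s * t) \<le> q * s^2 + t^2/q" using q by (simp add: zero_le_mult_iff)
    then show ?thesis using False tF unfolding Fw_def by simp
  qed
qed

definition gw :: "real \<Rightarrow> real \<Rightarrow> real \<Rightarrow> real" where
  "gw p q z = (if z \<ge> 0 then z / p else z / q)"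

lemma gw_F:
  assumes "p > 0" "q > 0" "R > 0"
  shows "Fw p q (gw p q z / R) = Fw (1/p) (1/q) z / R^2"
    and "(gw p q z / R) * z = Fw (1/p) (1/q) z / R"
  using assms unfolding Fw_def gw_def
  by (auto simp: max_def min_def power2_eq_square field_simps divide_le_0_iff zero_le_divide_iff)

lemma polar_gen:
  fixes B :: "'a::euclidean_space set"
  assumes fin: "finite B"
    and orth: "\<And>e e'. e \<in> B \<Longrightarrow> e' \<in> B \<Longrightarrow> e \<bullet> e' = (if e = e' then 1 else 0)"
    and exp: "\<And>x. x = (\<Sum>e\<in>B. (x \<bullet> e) *\<^sub>R e)"
    and pos: "\<And>e. e \<in> B \<Longrightarrow> P e > 0 \<and> Q e > 0"
  shows "polar {x. (\<Sum>e\<in>B. Fw (P e) (Q e) (x \<bullet> e)) \<le> 1} =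
         {z. (\<Sum>e\<in>B. Fw (1 / P e) (1 / Q e) (z \<bullet> e)) \<le> 1}"
proof -
  have ip: "x \<bullet> z = (\<Sum>e\<in>B. (x \<bullet> e) * (z \<bullet> e))" for x z :: 'a
  proof -
    have "x \<bullet> z = (\<Sum>e\<in>B. (x \<bullet> e) *\<^sub>R e) \<bullet> z" using exp[of x] by simp
    also have "\<dots> = (\<Sum>e\<in>B. (x \<bullet> e) * (e \<bullet> z))" by (simp add: inner_sum_left)
    also have "\<dots> = (\<Sum>e\<in>B. (x \<bullet> e) * (z \<bullet> e))" by (simp add: inner_commute)
    finally show ?thesis .
  qed
  have coord: "(\<Sum>e\<in>B. y e *\<^sub>R e) \<bullet> e' = y e'" if "e' \<in> B" for y e'
  proof -
    have "(\<Sum>e\<in>B. y e *\<^sub>R e) \<bullet> e' = (\<Sum>e\<in>B. y e * (e \<bullet> e'))" by (simp add: inner_sum_left)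
    also have "\<dots> = (\<Sum>e\<in>B. if e = e' then y e' else 0)"
      using orth that by (intro sum.cong) auto
    also have "\<dots> = y e'" using fin that by simp
    finally show ?thesis .
  qed
  show ?thesis
  proof
    show "polar {x. (\<Sum>e\<in>B. Fw (P e) (Q e) (x \<bullet> e)) \<le> 1} \<subseteq> {z. (\<Sum>e\<in>B. Fw (1 / P e) (1 / Q e) (z \<bullet> e)) \<le> 1}"
    proof
      fix z assume zp: "z \<in> polar {x. (\<Sum>e\<in>B. Fw (P e) (Q e) (x \<bullet> e)) \<le> 1}"
      define R2 where "R2 = (\<Sum>e\<in>B. Fw (1 / P e) (1 / Q e) (z \<bullet> e))"
      show "z \<in> {z. (\<Sum>e\<in>B. Fw (1 / P e) (1 / Q e) (z \<bullet> e)) \<le> 1}"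
      proof (rule ccontr)
        assume "z \<notin> {z. (\<Sum>e\<in>B. Fw (1 / P e) (1 / Q e) (z \<bullet> e)) \<le> 1}"
        then have R2g: "R2 > 1" unfolding R2_def by simp
        define R where "R = sqrt R2"
        have R: "R > 0" "R^2 = R2" "R > 1" using R2g unfolding R_def by auto
        define x where "x = (\<Sum>e\<in>B. (gw (P e) (Q e) (z \<bullet> e) / R) *\<^sub>R e)"
        have xe: "x \<bullet> e = gw (P e) (Q e) (z \<bullet> e) / R" if "e \<in> B" for e
          unfolding x_def using coord[OF that] .
        have "(\<Sum>e\<in>B. Fw (P e) (Q e) (x \<bullet> e)) = (\<Sum>e\<in>B. Fw (1 / P e) (1 / Q e) (z \<bullet> e) / R^2)"
          using xe pos gw_F(1) R(1) by (intro sum.cong) auto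
        also have "\<dots> = 1" using R R2g unfolding R2_def[symmetric] sum_divide_distrib[symmetric] by simp
        finally have "x \<in> {x. (\<Sum>e\<in>B. Fw (P e) (Q e) (x \<bullet> e)) \<le> 1}" by simp
        then have "x \<bullet> z \<le> 1" using zp unfolding polar_def by blast
        moreover have "x \<bullet> z = (\<Sum>e\<in>B. Fw (1 / P e) (1 / Q e) (z \<bullet> e) / R)"
          unfolding ip[of x z] using xe pos gw_F(2) R(1) by (intro sum.cong) auto
        moreover have "(\<Sum>e\<in>B. Fw (1 / P e) (1 / Q e) (z \<bullet> e) / R) = R"
        proof -
          have "R2 / R = R" using R(1) R(2)[symmetric] by (simp add: power2_eq_square)
          then show ?thesis unfolding R2_def[symmetric] sum_divide_distrib[symmetric] .
        qed
        ultimately show False using R by simp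
      qed
    qed
    show "{z. (\<Sum>e\<in>B. Fw (1 / P e) (1 / Q e) (z \<bullet> e)) \<le> 1} \<subseteq> polar {x. (\<Sum>e\<in>B. Fw (P e) (Q e) (x \<bullet> e)) \<le> 1}"
    proof
      fix z assume z: "z \<in> {z. (\<Sum>e\<in>B. Fw (1 / P e) (1 / Q e) (z \<bullet> e)) \<le> 1}"
      show "z \<in> polar {x. (\<Sum>e\<in>B. Fw (P e) (Q e) (x \<bullet> e)) \<le> 1}"
        unfolding polar_def
      proof (intro CollectI ballI)
        fix a assume a: "a \<in> {x. (\<Sum>e\<in>B. Fw (P e) (Q e) (x \<bullet> e)) \<le> 1}"
        have "a \<bullet> z = (\<Sum>e\<in>B. (a \<bullet> e) * (z \<bullet> e))" by (rule ip)
        also have "\<dots> \<le> (\<Sum>e\<in>B. (Fw (P e) (Q e) (a \<bullet> e) + Fw (1 / P e) (1 / Q e) (z \<bullet> e)) / 2)"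
          using pos Fw_young by (intro sum_mono) auto
        also have "\<dots> = ((\<Sum>e\<in>B. Fw (P e) (Q e) (a \<bullet> e)) + (\<Sum>e\<in>B. Fw (1 / P e) (1 / Q e) (z \<bullet> e))) / 2"
          by (simp add: sum_divide_distrib[symmetric] sum.distrib)
        also have "\<dots> \<le> 1" using a z by simp
        finally show "a \<bullet> z \<le> 1" .
      qed
    qed
  qed
qed

lemma polar_closed: "closed (polar X)"
proof -
  have "polar X = (\<Inter>a\<in>X. {x. a \<bullet> x \<le> 1})" unfolding polar_def by auto
  then show ?thesis by (simp add: closed_INT closed_halfspace_le)
qed

lemma polar_convex: "convex (polar X)"
proof -
  have "polar X = (\<Inter>a\<in>X. {x. a \<bullet> x \<le> 1})" unfolding polar_def by auto
  then show ?thesis by (simp add: convex_INT convex_halfspace_le)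
qed

lemma polar_bounded:
  fixes Y :: "'a::euclidean_space set"
  assumes "0 \<in> interior Y" shows "bounded (polar Y)"
proof -
  obtain r where r: "r > 0" "cball 0 r \<subseteq> Y" using assms mem_interior_cball by blast
  have "norm x \<le> 1 / r" if "x \<in> polar Y" for x
  proof (cases "x = 0")
    case True then show ?thesis using r by simp
  next
    case False
    have "(r / norm x) *\<^sub>R x \<in> Y" using r False by (intro subsetD[OF r(2)]) auto
    then have "((r / norm x) *\<^sub>R x) \<bullet> x \<le> 1" using that unfolding polar_def by blast
    then have "r * norm x \<le> 1" using False by (simp add: dot_square_norm power2_eq_square)
    then show ?thesis using r by (simp add: field_simps mult.commute)
  qed
  then show ?thesis unfolding bounded_iff by blast
qed



definition Pf :: "real \<Rightarrow> real \<Rightarrow> real" where "Pf l c = (if l < 0 then -l * c^2 else l)"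
definition Qf :: "real \<Rightarrow> real \<Rightarrow> real" where "Qf l c = (if l < 0 then -l / c^2 else l)"

lemma PQ_pos: "l \<noteq> 0 \<Longrightarrow> c > 0 \<Longrightarrow> Pf l c > 0 \<and> Qf l c > 0"
  unfolding Pf_def Qf_def by (auto simp: mult_neg_pos divide_neg_pos)

lemma Fw_T:
  assumes "l \<noteq> 0" "c > 0"
  shows "Fw (1 / Pf l c) (1 / Qf l c) (l * s) = Fw (Pf l c) (Qf l c) s"
proof (cases "l < 0")
  case True
  show ?thesis
  proof (cases "s \<ge> 0")
    case True
    then have "l * s \<le> 0" using \<open>l<0\<close> by (simp add: mult_nonpos_nonneg)
    then show ?thesis using True \<open>l<0\<close> assms unfolding Fw_def Pf_def Qf_def
      by (simp add: max_def min_def power2_eq_square field_simps)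
  next
    case False
    then have "l * s > 0" using \<open>l<0\<close> by (simp add: mult_neg_neg)
    then show ?thesis using False \<open>l<0\<close> assms unfolding Fw_def Pf_def Qf_def
      by (simp add: max_def min_def power2_eq_square field_simps)
  qed
next
  case False
  then have l: "l > 0" using assms by simp
  show ?thesis
  proof (cases "s \<ge> 0")
    case True
    then have "l * s \<ge> 0" using l by simp
    then show ?thesis using True l unfolding Fw_def Pf_def Qf_def
      by (simp add: max_def min_def power2_eq_square field_simps)
  next
    case False
    then have "l * s < 0" using l by (simp add: mult_pos_neg)
    then show ?thesis using False l unfolding Fw_def Pf_def Qf_def
      by (simp add: max_def min_def power2_eq_square field_simps)
  qed
qed

lemma coord_lemma:
  fixes B :: "'a::euclidean_space set"
  assumes fin: "finite B"
    and orth: "\<And>e e'. e \<in> B \<Longrightarrow> e' \<in> B \<Longrightarrow> e \<bullet> e' = (if e = e' then 1 else 0)"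
    and "e' \<in> B"
  shows "(\<Sum>e\<in>B. y e *\<^sub>R e) \<bullet> e' = y e'"
proof -
  have "(\<Sum>e\<in>B. y e *\<^sub>R e) \<bullet> e' = (\<Sum>e\<in>B. y e * (e \<bullet> e'))" by (simp add: inner_sum_left)
  also have "\<dots> = (\<Sum>e\<in>B. if e = e' then y e' else 0)"
    using orth assms(3) by (intro sum.cong) auto
  also have "\<dots> = y e'" using fin assms(3) by simp
  finally show ?thesis .
qed

lemma cont_Phi: "continuous_on UNIV (\<lambda>z::'a::euclidean_space. \<Sum>e\<in>B. Fw (a e) (b e) (z \<bullet> e))"
  unfolding Fw_def by (intro continuous_intros)

lemma zero_interior_Phi:
  fixes B :: "'a::euclidean_space set"
  shows "0 \<in> interior {z. (\<Sum>e\<in>B. Fw (a e) (b e) (z \<bullet> e)) \<le> 1}"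
proof -
  have o: "open {z::'a. (\<Sum>e\<in>B. Fw (a e) (b e) (z \<bullet> e)) < 1}"
    using open_Collect_less[OF cont_Phi continuous_on_const] .
  have "0 \<in> {z::'a. (\<Sum>e\<in>B. Fw (a e) (b e) (z \<bullet> e)) < 1}" by simp
  moreover have "{z::'a. (\<Sum>e\<in>B. Fw (a e) (b e) (z \<bullet> e)) < 1} \<subseteq> {z. (\<Sum>e\<in>B. Fw (a e) (b e) (z \<bullet> e)) \<le> 1}"
    by auto
  ultimately show ?thesis using o interior_maximal by blast
qed

lemma main_gen:
  fixes T :: "'a::euclidean_space \<Rightarrow> 'a"
  assumes lin: "linear T" and bij: "bij T" and sm: "symmetric_map T"
    and npd: "\<not> positive_definite T"
  shows "infinite {X \<in> K0b. polar X = T ` X}"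
proof -
  have sym: "\<And>x y. T x \<bullet> y = x \<bullet> T y" using sm unfolding symmetric_map_def by blast
  obtain B where B: "finite B" "pairwise orthogonal B" "\<forall>x\<in>B. norm x = 1" "span B = UNIV"
      "\<forall>x\<in>B. T x = (x \<bullet> T x) *\<^sub>R x"
    using spectral_sub[OF lin sym, of UNIV] subspace_UNIV by blast
  define lam where "lam e = e \<bullet> T e" for e
  have Tlam: "T e = lam e *\<^sub>R e" if "e \<in> B" for e using B(5) that unfolding lam_def by blast
  have orth: "e \<bullet> e' = (if e = e' then 1 else 0)" if "e \<in> B" "e' \<in> B" for e e'
  proof (cases "e = e'")
    case True then show ?thesis using B(3) that by (simp add: dot_square_norm)
  next
    case False then show ?thesis using B(2) that unfolding pairwise_def orthogonal_def by auto
  qed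
  have exp: "x = (\<Sum>e\<in>B. (x \<bullet> e) *\<^sub>R e)" for x
  proof -
    have "x \<in> span B" using B(4) by simp
    then obtain u where u: "x = (\<Sum>v\<in>B. u v *\<^sub>R v)" using span_finite[OF B(1)] by auto
    have "x \<bullet> e = u e" if "e \<in> B" for e using coord_lemma[OF B(1) orth that] u by simp
    then show ?thesis using u by (metis (no_types, lifting) sum.cong)
  qed
  have ip: "x \<bullet> z = (\<Sum>e\<in>B. (x \<bullet> e) * (z \<bullet> e))" for x z
  proof -
    have "x \<bullet> z = (\<Sum>e\<in>B. (x \<bullet> e) *\<^sub>R e) \<bullet> z" using exp[of x] by simp
    also have "\<dots> = (\<Sum>e\<in>B. (x \<bullet> e) * (e \<bullet> z))" by (simp add: inner_sum_left)
    also have "\<dots> = (\<Sum>e\<in>B. (x \<bullet> e) * (z \<bullet> e))" by (simp add: inner_commute)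
    finally show ?thesis .
  qed
  have Tin: "T x \<bullet> e = lam e * (x \<bullet> e)" if "e \<in> B" for x e
    using sym[of x e] Tlam[OF that] by simp
  have injT: "inj T" using bij bij_is_inj by blast
  have lam0: "lam e \<noteq> 0" if "e \<in> B" for e
  proof
    assume "lam e = 0"
    then have "T e = T 0" using Tlam[OF that] linear_0[OF lin] by simp
    then have "e = 0" using injT by (simp add: inj_eq)
    then show False using B(3) that by (metis norm_zero zero_neq_one)
  qed
  obtain e0 where e0: "e0 \<in> B" "lam e0 < 0"
  proof -
    have "\<exists>e0\<in>B. lam e0 < 0"
    proof (rule ccontr)
      assume "\<not> (\<exists>e0\<in>B. lam e0 < 0)"
      then have lp: "\<forall>e\<in>B. lam e > 0" using lam0 by force
      obtain x where x: "x \<noteq> 0" "\<not> x \<bullet> T x > 0" using npd unfolding positive_definite_def by blast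
      obtain e1 where e1: "e1 \<in> B" "x \<bullet> e1 \<noteq> 0"
      proof -
        have "\<exists>e1\<in>B. x \<bullet> e1 \<noteq> 0"
        proof (rule ccontr)
          assume "\<not> (\<exists>e1\<in>B. x \<bullet> e1 \<noteq> 0)"
          then have "x = (\<Sum>e\<in>B. 0 *\<^sub>R e)" using exp[of x] by (metis (no_types, lifting) sum.cong)
          then show False using x by simp
        qed
        then show ?thesis using that by blast
      qed
      have "x \<bullet> T x = (\<Sum>e\<in>B. (x \<bullet> e) * (T x \<bullet> e))" by (rule ip)
      also have "\<dots> = (\<Sum>e\<in>B. lam e * (x \<bullet> e)^2)" using Tin by (intro sum.cong) (auto simp: power2_eq_square)
      also have "\<dots> > 0"
        using e1 lp by (intro sum_pos2[OF B(1) e1(1)]) (auto intro: mult_nonneg_nonneg less_imp_le)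
      finally show False using x by simp
    qed
    then show ?thesis using that by blast
  qed
  define X where "X c = {x. (\<Sum>e\<in>B. Fw (Pf (lam e) c) (Qf (lam e) c) (x \<bullet> e)) \<le> 1}" for c
  define Y where "Y c = {z. (\<Sum>e\<in>B. Fw (1 / Pf (lam e) c) (1 / Qf (lam e) c) (z \<bullet> e)) \<le> 1}" for c
  have sol: "X c \<in> K0b \<and> polar (X c) = T ` (X c)" if c: "c > 0" for c
  proof -
    have pos: "Pf (lam e) c > 0 \<and> Qf (lam e) c > 0" if "e \<in> B" for e
      using PQ_pos[OF lam0[OF that] c] .
    have pX: "polar (X c) = Y c" unfolding X_def Y_def
      by (rule polar_gen[OF B(1) orth exp pos]) auto
    have pos': "1 / Pf (lam e) c > 0 \<and> 1 / Qf (lam e) c > 0" if "e \<in> B" for e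
      using pos[OF that] by simp
    have pY: "polar (Y c) = X c" unfolding X_def Y_def
      using polar_gen[OF B(1) orth exp pos'] by simp
    have TX: "T ` (X c) = Y c"
    proof
      show "T ` X c \<subseteq> Y c"
      proof
        fix z assume "z \<in> T ` X c"
        then obtain x where x: "x \<in> X c" "z = T x" by auto
        have "(\<Sum>e\<in>B. Fw (1 / Pf (lam e) c) (1 / Qf (lam e) c) (z \<bullet> e)) =
              (\<Sum>e\<in>B. Fw (Pf (lam e) c) (Qf (lam e) c) (x \<bullet> e))"
          using x(2) Tin Fw_T lam0 c by (intro sum.cong) auto
        then show "z \<in> Y c" using x(1) unfolding X_def Y_def by simp
      qed
      show "Y c \<subseteq> T ` X c"
      proof
        fix z assume z: "z \<in> Y c"
        obtain x where x: "z = T x" using bij by (metis bij_pointE)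
        have "(\<Sum>e\<in>B. Fw (1 / Pf (lam e) c) (1 / Qf (lam e) c) (z \<bullet> e)) =
              (\<Sum>e\<in>B. Fw (Pf (lam e) c) (Qf (lam e) c) (x \<bullet> e))"
          using x Tin Fw_T lam0 c by (intro sum.cong) auto
        then have "x \<in> X c" using z unfolding X_def Y_def by simp
        then show "z \<in> T ` X c" using x by blast
      qed
    qed
    have "compact (X c)"
      unfolding compact_eq_bounded_closed
      using pY[symmetric] polar_closed polar_bounded zero_interior_Phi unfolding Y_def by metis
    moreover have "convex (X c)" using pY[symmetric] polar_convex by metis
    moreover have "0 \<in> interior (X c)" unfolding X_def by (rule zero_interior_Phi)
    ultimately show ?thesis using pX TX unfolding K0b_def by simp
  qed
  have injX: "inj_on X {0<..}"
  proof
    fix c1 c2 :: real assume c1: "c1 \<in> {0<..}" and c2: "c2 \<in> {0<..}" and eq: "X c1 = X c2"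
    define \<mu> where "\<mu> = - lam e0"
    have mu: "\<mu> > 0" using e0 unfolding \<mu>_def by simp
    have line: "t *\<^sub>R e0 \<in> X c \<longleftrightarrow> \<mu> * c^2 * t^2 \<le> 1" if "t \<ge> 0" for t c
    proof -
      have "(\<Sum>e\<in>B. Fw (Pf (lam e) c) (Qf (lam e) c) ((t *\<^sub>R e0) \<bullet> e)) =
            (\<Sum>e\<in>B. if e = e0 then Fw (Pf (lam e0) c) (Qf (lam e0) c) t else 0)"
        using orth e0(1) by (intro sum.cong) auto
      also have "\<dots> = Fw (Pf (lam e0) c) (Qf (lam e0) c) t" using B(1) e0(1) by simp
      also have "\<dots> = \<mu> * c^2 * t^2" using that e0(2) unfolding Fw_def Pf_def \<mu>_def by simp
      finally show ?thesis unfolding X_def by simp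
    qed
    have key: "X a \<noteq> X b" if ab: "0 < a" "a < b" for a b
    proof
      assume "X a = X b"
      define t where "t = 1 / (a * sqrt \<mu>)"
      have t0: "t \<ge> 0" using ab mu unfolding t_def by simp
      have "\<mu> * a^2 * t^2 = 1" using ab mu unfolding t_def by (simp add: power2_eq_square field_simps)
      then have "t *\<^sub>R e0 \<in> X a" using line[OF t0] by simp
      moreover have "\<mu> * b^2 * t^2 > 1"
      proof -
        have "\<mu> * b^2 * t^2 = b^2 / a^2" using ab mu unfolding t_def by (simp add: power2_eq_square field_simps)
        moreover have "a^2 < b^2" using ab by (simp add: power_strict_mono)
        ultimately show ?thesis using ab by simp
      qed
      then have "t *\<^sub>R e0 \<notin> X b" using line[OF t0] by simp
      ultimately show False using \<open>X a = X b\<close> by simp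
    qed
    show "c1 = c2"
    proof (rule ccontr)
      assume "c1 \<noteq> c2"
      then have "c1 < c2 \<or> c2 < c1" by linarith
      then show False using key eq c1 c2 by fastforce
    qed
  qed
  have "X ` {0<..} \<subseteq> {X \<in> K0b. polar X = T ` X}" using sol by auto
  moreover have "infinite (X ` {(0::real)<..})"
    using injX infinite_Ioi finite_imageD by blast
  ultimately show ?thesis using infinite_super by blast
qed


theorem mainTheorem19:
  fixes T :: "real^'n \<Rightarrow> real^'n"
  assumes "CARD('n) \<ge> 2"
    and "linear T" and "bij T" and "symmetric_map T"
    and "\<not> positive_definite T"
  shows "infinite {X \<in> K0b. polar X = T ` X}
         \<and> infinite {X :: (real^'n) set. X \<in> K0b \<and> polar X = uminus ` X}"
proof
  show "infinite {X \<in> K0b. polar X = T ` X}" by (rule main_gen[OF assms(2-5)])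
  have l: "linear (uminus :: real^'n \<Rightarrow> real^'n)" by (rule linear_uminus)
  have b: "bij (uminus :: real^'n \<Rightarrow> real^'n)" by (rule bij_uminus)
  have s: "symmetric_map (uminus :: real^'n \<Rightarrow> real^'n)" unfolding symmetric_map_def using l by simp
  obtain v :: "real^'n" where v: "v \<in> Basis" using nonempty_Basis by blast
  then have v0: "v \<noteq> 0" using nonzero_Basis by blast
  have "\<not> positive_definite (uminus :: real^'n \<Rightarrow> real^'n)"
  proof
    assume "positive_definite (uminus :: real^'n \<Rightarrow> real^'n)"
    then have "v \<bullet> (- v) > 0" using v0 unfolding positive_definite_def by blast
    then show False using inner_ge_zero[of v] by simp
  qed
  from main_gen[OF l b s this]
  show "infinite {X :: (real^'n) set. X \<in> K0b \<and> polar X = uminus ` X}" by simp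
qed

end
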